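(* Let $(a_i)_{i=1}^n$ be a strictly V-shaped finite real sequence ($n\ge2$) and let $\alpha<\beta$ be real numbers. Then there exists a subdivision $\alpha=t_1<t_2<\dots<t_n=\beta$ of $[\alpha,\beta]$ such that $(t_i)_{i=1}^n\in T_a$.
   Context: For a real sequence $(x_i)$, $\Delta x_i=x_{i+1}-x_i$. "Increasing" means strictly increasing. For a real sequence $a=(a_i)_{i=1}^n$, $T_a$ denotes the set of increasing real sequences $(t_i)_{i=1}^n$ such that $(\Delta a_i/\Delta t_i)_{i=1}^{n-1}$ is non-decreasing. A sequence is strictly V-shaped if there are indices $1\le m\le M\le n$ such that $a_1>a_2>\dots>a_m=a_{m+1}=\dots=a_M<a_{M+1}<\dots<a_n$ (i.e. it is strictly monotonic, or strictly decreasing then constant, or constant then strictly increasing, or strictly decreasing then strictly increasing, or strictly decreasing then constant then strictly increasing). *)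

theory Defs
  imports Main "HOL-Analysis.Analysis"
begin

text \<open>Finite sequences (x_i)_{i=1}^n are represented as functions nat => real,
  only the values at indices 1..n being relevant.\<close>

definition fdiff :: "(nat \<Rightarrow> real) \<Rightarrow> nat \<Rightarrow> real" where
  "fdiff x i = x (Suc i) - x i"

definition increasing_seq :: "nat \<Rightarrow> (nat \<Rightarrow> real) \<Rightarrow> bool" where
  "increasing_seq n t \<longleftrightarrow> (\<forall>i. 1 \<le> i \<and> i < n \<longrightarrow> t i < t (Suc i))"

definition in_T :: "nat \<Rightarrow> (nat \<Rightarrow> real) \<Rightarrow> (nat \<Rightarrow> real) \<Rightarrow> bool" where
  "in_T n a t \<longleftrightarrow> increasing_seq n t \<and>
     (\<forall>i j. 1 \<le> i \<and> i \<le> j \<and> j \<le> n - 1 \<longrightarrow>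
        fdiff a i / fdiff t i \<le> fdiff a j / fdiff t j)"

definition strictly_V_shaped :: "nat \<Rightarrow> (nat \<Rightarrow> real) \<Rightarrow> bool" where
  "strictly_V_shaped n a \<longleftrightarrow> (\<exists>m M. 1 \<le> m \<and> m \<le> M \<and> M \<le> n \<and>
     (\<forall>i. 1 \<le> i \<and> i < m \<longrightarrow> a i > a (Suc i)) \<and>
     (\<forall>i. m \<le> i \<and> i < M \<longrightarrow> a i = a (Suc i)) \<and>
     (\<forall>i. M \<le> i \<and> i < n \<longrightarrow> a i < a (Suc i)))"

end

theory Submission
  imports Defs
begin

theorem theorem2p3:
  fixes n :: nat and a :: "nat \<Rightarrow> real" and \<alpha> \<beta> :: real
  assumes "n \<ge> 2"
    and "strictly_V_shaped n a"
    and "\<alpha> < \<beta>"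
  shows "\<exists>t :: nat \<Rightarrow> real. t 1 = \<alpha> \<and> t n = \<beta> \<and> in_T n a t"
proof -
  obtain m M where mM: "1 \<le> m" "m \<le> M" "M \<le> n"
    and dec: "\<forall>i. 1 \<le> i \<and> i < m \<longrightarrow> a i > a (Suc i)"
    and con: "\<forall>i. m \<le> i \<and> i < M \<longrightarrow> a i = a (Suc i)"
    and inc: "\<forall>i. M \<le> i \<and> i < n \<longrightarrow> a i < a (Suc i)"
    using assms(2) unfolding strictly_V_shaped_def by blast
  define w where "w i = (if fdiff a i = 0 then 1 else \<bar>fdiff a i\<bar>)" for i
  have wpos: "w i > 0" for i by (simp add: w_def)
  define S where "S = (\<Sum>i\<in>{1..<n}. w i)"
  have Spos: "S > 0" unfolding S_def
    by (rule sum_pos) (use assms(1) wpos in auto)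
  define c where "c = (\<beta> - \<alpha>) / S"
  have cpos: "c > 0" using Spos assms(3) by (simp add: c_def)
  define t where "t k = \<alpha> + c * (\<Sum>i\<in>{1..<k}. w i)" for k
  have t1: "t 1 = \<alpha>" by (simp add: t_def)
  have tn: "t n = \<beta>" using Spos by (simp add: t_def c_def S_def)
  have ft: "fdiff t i = c * w i" if "1 \<le> i" for i
  proof -
    have "{1..<Suc i} = insert i {1..<i}" using that by auto
    then show ?thesis by (simp add: t_def fdiff_def algebra_simps)
  qed
  have ratio: "fdiff a i / fdiff t i = sgn (fdiff a i) / c" if "1 \<le> i" for i
    using ft[OF that] cpos by (auto simp: w_def sgn_if field_simps)
  have sg: "sgn (fdiff a i) = (if i < m then -1 else if i < M then 0 else 1)"
    if "1 \<le> i" "i < n" for i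
  proof (cases "i < m")
    case True
    then have "a (Suc i) < a i" using dec that by blast
    then show ?thesis using True by (simp add: fdiff_def)
  next
    case F: False
    show ?thesis
    proof (cases "i < M")
      case True
      then have "a i = a (Suc i)" using con F by auto
      then show ?thesis using True F by (simp add: fdiff_def)
    next
      case False
      then have "a i < a (Suc i)" using inc that by auto
      then show ?thesis using False F by (simp add: fdiff_def)
    qed
  qed
  have "in_T n a t"
    unfolding in_T_def increasing_seq_def
  proof (intro conjI allI impI)
    fix i assume "1 \<le> i \<and> i < n"
    then show "t i < t (Suc i)" using ft[of i] cpos wpos[of i]
      by (simp add: fdiff_def) (metis diff_gt_0_iff_gt mult_pos_pos)
  next
    fix i j assume h: "1 \<le> i \<and> i \<le> j \<and> j \<le> n - 1"
    have "sgn (fdiff a i) \<le> sgn (fdiff a j)"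
    proof -
      have ii: "1 \<le> i" "i < n" and jj: "1 \<le> j" "j < n" using h assms(1) by auto
      show ?thesis unfolding sg[OF ii] sg[OF jj] using h by auto
    qed
    then show "fdiff a i / fdiff t i \<le> fdiff a j / fdiff t j"
      using ratio[of i] ratio[of j] h cpos by (simp add: divide_right_mono)
  qed
  then show ?thesis using t1 tn by blast
qed

end
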